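(* Let $0<\mu<1/4$ and $\kappa\in\mathbb{R}$. Let $f(x)=(1+\mu\cos x)^{-2}$, $g(y)=y^2(1-y^2)$, and let $K$ be the Gaussian curvature of the metric $(f(x)+g(y))(dx^2+dy^2)$ on $\mathbb{R}\times[-1,1]$. Let $\gamma(s)=\tfrac12\operatorname{sech}s$, and consider the curve $y(x)=\gamma(\kappa+x+\mu\sin x)$. Define $$I(x):=K_x(x,y(x))\,g(y(x))-K_y(x,y(x))\,f(x)\,y'(x)$$ and, for $L>0$, $$B_L(\kappa):=\int_{-\infty}^{-L}I(x)\,dx+\int_{L}^{\infty}I(x)\,dx .$$ Then $$|B_L(\kappa)|\le 1200\,(1+2e^{2|\kappa|})\,\gamma(L)^2 .$$
   Context: $K_x,K_y$ are the partial derivatives of $K$ in $x$ and $y$. The curve $y=\gamma(\kappa+x+\mu\sin x)$ is a geodesic of this metric lying on the homoclinic connection of the closed geodesic $\{y=0\}$. *)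

theory Defs
  imports "HOL-Analysis.Analysis"
begin

definition ff :: "real \<Rightarrow> real \<Rightarrow> real" where
  "ff \<mu> x = 1 / (1 + \<mu> * cos x)^2"

definition gg :: "real \<Rightarrow> real" where
  "gg y = y^2 * (1 - y^2)"

definition lam :: "real \<Rightarrow> real \<Rightarrow> real \<Rightarrow> real" where
  "lam \<mu> x y = ff \<mu> x + gg y"

text \<open>Gaussian curvature of a conformal metric lambda (dx^2+dy^2):
  K = - (1 / (2 lambda)) * Laplacian (ln lambda).\<close>
definition KK :: "real \<Rightarrow> real \<Rightarrow> real \<Rightarrow> real" where
  "KK \<mu> x y = - (1 / (2 * lam \<mu> x y)) *
     (deriv (\<lambda>t. deriv (\<lambda>s. ln (lam \<mu> s y)) t) x
      + deriv (\<lambda>t. deriv (\<lambda>s. ln (lam \<mu> x s)) t) y)"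

definition KK_x :: "real \<Rightarrow> real \<Rightarrow> real \<Rightarrow> real" where
  "KK_x \<mu> x y = deriv (\<lambda>s. KK \<mu> s y) x"

definition KK_y :: "real \<Rightarrow> real \<Rightarrow> real \<Rightarrow> real" where
  "KK_y \<mu> x y = deriv (\<lambda>s. KK \<mu> x s) y"

definition gam :: "real \<Rightarrow> real" where
  "gam s = 1 / (2 * cosh s)"

definition ycurve :: "real \<Rightarrow> real \<Rightarrow> real \<Rightarrow> real" where
  "ycurve \<mu> \<kappa> x = gam (\<kappa> + x + \<mu> * sin x)"

definition II :: "real \<Rightarrow> real \<Rightarrow> real \<Rightarrow> real" where
  "II \<mu> \<kappa> x = KK_x \<mu> x (ycurve \<mu> \<kappa> x) * gg (ycurve \<mu> \<kappa> x)
      - KK_y \<mu> x (ycurve \<mu> \<kappa> x) * ff \<mu> x * deriv (ycurve \<mu> \<kappa>) x"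

definition BB :: "real \<Rightarrow> real \<Rightarrow> real \<Rightarrow> real" where
  "BB \<mu> L \<kappa> = (LBINT x:{..-L}. II \<mu> \<kappa> x) + (LBINT x:{L..}. II \<mu> \<kappa> x)"

end

theory Submission
  imports Defs
begin

definition F1 :: "real \<Rightarrow> real \<Rightarrow> real" where
  "F1 \<mu> x = 2 * \<mu> * sin x / (1 + \<mu> * cos x)^3"
definition F2 :: "real \<Rightarrow> real \<Rightarrow> real" where
  "F2 \<mu> x = 2 * \<mu> * cos x / (1 + \<mu> * cos x)^3 + 6 * \<mu>^2 * (sin x)^2 / (1 + \<mu> * cos x)^4"
definition F3 :: "real \<Rightarrow> real \<Rightarrow> real" where
  "F3 \<mu> x = - 2 * \<mu> * sin x / (1 + \<mu> * cos x)^3 + 18 * \<mu>^2 * sin x * cos x / (1 + \<mu> * cos x)^4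
     + 24 * \<mu>^3 * (sin x)^3 / (1 + \<mu> * cos x)^5"

lemma cpos: "\<bar>\<mu>\<bar> < 1 \<Longrightarrow> 1 + \<mu> * cos (x::real) > 0"
proof -
  assume a: "\<bar>\<mu>\<bar> < 1"
  have "\<bar>\<mu> * cos x\<bar> \<le> \<bar>\<mu>\<bar>" using abs_cos_le_one[of x] by (simp add: abs_mult mult_left_le)
  thus ?thesis using a by linarith
qed

lemma ff_deriv: "\<bar>\<mu>\<bar> < 1 \<Longrightarrow> (ff \<mu> has_real_derivative F1 \<mu> x) (at x)"
  unfolding ff_def F1_def
  apply (rule derivative_eq_intros refl | (insert cpos[of \<mu> x], simp; fail))+
  apply (subgoal_tac "1 + \<mu> * cos x \<noteq> 0")
  apply (simp add: divide_simps)
   apply algebra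
  using cpos[of \<mu> x] apply simp
  done

lemma F1_deriv: "\<bar>\<mu>\<bar> < 1 \<Longrightarrow> (F1 \<mu> has_real_derivative F2 \<mu> x) (at x)"
  unfolding F1_def F2_def
  apply (rule derivative_eq_intros refl | (insert cpos[of \<mu> x], simp; fail))+
  apply (subgoal_tac "1 + \<mu> * cos x \<noteq> 0")
  apply (simp add: divide_simps)
   apply algebra
  using cpos[of \<mu> x] apply simp
  done

lemma F2_deriv: "\<bar>\<mu>\<bar> < 1 \<Longrightarrow> (F2 \<mu> has_real_derivative F3 \<mu> x) (at x)"
  unfolding F2_def F3_def
  apply (rule derivative_eq_intros refl | (insert cpos[of \<mu> x], simp; fail))+
  apply (subgoal_tac "1 + \<mu> * cos x \<noteq> 0")
  apply (simp add: divide_simps)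
   apply algebra
  using cpos[of \<mu> x] apply simp
  done

definition G1 :: "real \<Rightarrow> real" where "G1 y = 2 * y - 4 * y^3"
definition G2 :: "real \<Rightarrow> real" where "G2 y = 2 - 12 * y^2"
definition G3 :: "real \<Rightarrow> real" where "G3 y = - 24 * y"

lemma gg_deriv: "(gg has_real_derivative G1 y) (at y)"
  unfolding gg_def G1_def by (rule derivative_eq_intros refl)+ (simp add: algebra_simps power2_eq_square power3_eq_cube)
lemma G1_deriv: "(G1 has_real_derivative G2 y) (at y)"
  unfolding G2_def G1_def by (rule derivative_eq_intros refl)+ (simp add: algebra_simps power2_eq_square power3_eq_cube)
lemma G2_deriv: "(G2 has_real_derivative G3 y) (at y)"
  unfolding G2_def G3_def by (rule derivative_eq_intros refl)+ (simp add: algebra_simps power2_eq_square power3_eq_cube)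

lemma ff_pos: "\<bar>\<mu>\<bar> < 1 \<Longrightarrow> ff \<mu> x > 0"
  unfolding ff_def using cpos[of \<mu> x] by simp

lemma gg_nonneg: "\<bar>y\<bar> \<le> 1 \<Longrightarrow> gg y \<ge> 0"
proof -
  assume "\<bar>y\<bar> \<le> 1"
  then have "y^2 \<le> 1" by (metis abs_le_square_iff abs_one power_one)
  thus ?thesis unfolding gg_def by simp
qed

lemma lam_pos: "\<bar>\<mu>\<bar> < 1 \<Longrightarrow> \<bar>y\<bar> \<le> 1 \<Longrightarrow> lam \<mu> x y > 0"
  unfolding lam_def using ff_pos[of \<mu> x] gg_nonneg[of y] by simp

definition Kexp :: "real \<Rightarrow> real \<Rightarrow> real \<Rightarrow> real" where
  "Kexp \<mu> x y = - (F2 \<mu> x + G2 y) / (2 * (lam \<mu> x y)^2) + ((F1 \<mu> x)^2 + (G1 y)^2) / (2 * (lam \<mu> x y)^3)"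

lemma KK_eq:
  assumes mu: "\<bar>\<mu>\<bar> < 1" and y: "\<bar>y\<bar> < 1"
  shows "KK \<mu> x y = Kexp \<mu> x y"
proof -
  have d1: "deriv (\<lambda>s. ln (lam \<mu> s y)) t = F1 \<mu> t / lam \<mu> t y" for t
    unfolding lam_def
    apply (rule DERIV_imp_deriv)
    apply (rule derivative_eq_intros refl ff_deriv[OF mu] | (insert lam_pos[OF mu, of y t] y, simp add: lam_def; fail))+
    done
  have d2: "deriv (\<lambda>t. deriv (\<lambda>s. ln (lam \<mu> s y)) t) x
     = (F2 \<mu> x * lam \<mu> x y - (F1 \<mu> x)^2) / (lam \<mu> x y)^2"
    unfolding d1 unfolding lam_def
    apply (rule DERIV_imp_deriv)
    apply (rule derivative_eq_intros refl ff_deriv[OF mu] F1_deriv[OF mu] | (insert lam_pos[OF mu, of y x] y, simp add: lam_def; fail))+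
    apply (simp add: power2_eq_square)
    done
  have d3: "deriv (\<lambda>s. ln (lam \<mu> x s)) t = G1 t / lam \<mu> x t" if "\<bar>t\<bar> < 1" for t
    unfolding lam_def
    apply (rule DERIV_imp_deriv)
    apply (rule derivative_eq_intros refl gg_deriv | (insert lam_pos[OF mu, of t x] that, simp add: lam_def; fail))+
    done
  have ev: "eventually (\<lambda>t. \<bar>t\<bar> < 1) (nhds y)"
  proof -
    have "eventually (\<lambda>t. t \<in> {-1<..<1}) (nhds y)"
      by (rule eventually_nhds_in_open) (use y in auto)
    then show ?thesis by (rule eventually_mono) auto
  qed
  have "deriv (\<lambda>t. deriv (\<lambda>s. ln (lam \<mu> x s)) t) y = deriv (\<lambda>t. G1 t / lam \<mu> x t) y"
    by (rule deriv_cong_ev[OF eventually_mono[OF ev]]) (auto simp: d3)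
  also have "\<dots> = (G2 y * lam \<mu> x y - (G1 y)^2) / (lam \<mu> x y)^2"
    unfolding lam_def
    apply (rule DERIV_imp_deriv)
    apply (rule derivative_eq_intros refl gg_deriv G1_deriv | (insert lam_pos[OF mu, of y x] y, simp add: lam_def; fail))+
    apply (simp add: power2_eq_square)
    done
  finally have d4: "deriv (\<lambda>t. deriv (\<lambda>s. ln (lam \<mu> x s)) t) y = (G2 y * lam \<mu> x y - (G1 y)^2) / (lam \<mu> x y)^2" .
  have lp: "lam \<mu> x y \<noteq> 0" using lam_pos[OF mu, of y x] y by simp
  show ?thesis unfolding KK_def d2 d4 Kexp_def using lp
    by (simp add: field_simps power2_eq_square power3_eq_cube)
qed

lemma lam_dx: "\<bar>\<mu>\<bar> < 1 \<Longrightarrow> ((\<lambda>s. lam \<mu> s y) has_real_derivative F1 \<mu> x) (at x)"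
  unfolding lam_def by (rule derivative_eq_intros ff_deriv refl | assumption)+ simp
lemma lam_dy: "(lam \<mu> x has_real_derivative G1 y) (at y)"
  unfolding lam_def by (rule derivative_eq_intros gg_deriv refl)+ simp

lemma Kgen_deriv:
  fixes A B L :: "real \<Rightarrow> real"
  assumes dA: "(A has_real_derivative A') (at x)" and dB: "(B has_real_derivative B') (at x)"
    and dL: "(L has_real_derivative L') (at x)" and L0: "L x \<noteq> 0"
  shows "((\<lambda>s. - A s / (2 * (L s)^2) + B s / (2 * (L s)^3)) has_real_derivative
      (- A' / (2 * (L x)^2) + A x * L' / (L x)^3 + B' / (2 * (L x)^3) - 3 * B x * L' / (2 * (L x)^4))) (at x)"
proof -
  have dP: "((\<lambda>s. inverse ((L s)^2)) has_real_derivative (- (2 * L') / (L x)^3)) (at x)"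
    apply (rule derivative_eq_intros dL refl | (use L0 in simp; fail))+
    using L0 by (simp add: divide_simps power2_eq_square power3_eq_cube)
  have dQ: "((\<lambda>s. inverse ((L s)^3)) has_real_derivative (- (3 * L') / (L x)^4)) (at x)"
    apply (rule derivative_eq_intros dL refl | (use L0 in simp; fail))+
    using L0 by (simp add: divide_simps power2_eq_square power3_eq_cube numeral_eq_Suc)
  have e: "(\<lambda>s. - A s / (2 * (L s)^2) + B s / (2 * (L s)^3)) = (\<lambda>s. (-1/2) * (A s * inverse ((L s)^2)) + (1/2) * (B s * inverse ((L s)^3)))"
    by (auto simp: divide_simps)
  show ?thesis unfolding e
    apply (rule DERIV_cong)
    apply (rule DERIV_add DERIV_cmult DERIV_mult dA dB dP dQ)+
    using L0 by (simp add: divide_simps) (simp add: algebra_simps power2_eq_square power3_eq_cube numeral_eq_Suc)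
qed

definition Kx :: "real \<Rightarrow> real \<Rightarrow> real \<Rightarrow> real" where
  "Kx \<mu> x y = - F3 \<mu> x / (2 * (lam \<mu> x y)^2) + (F2 \<mu> x + G2 y) * F1 \<mu> x / (lam \<mu> x y)^3
     + (2 * F1 \<mu> x * F2 \<mu> x) / (2 * (lam \<mu> x y)^3) - 3 * ((F1 \<mu> x)^2 + (G1 y)^2) * F1 \<mu> x / (2 * (lam \<mu> x y)^4)"

definition Ky :: "real \<Rightarrow> real \<Rightarrow> real \<Rightarrow> real" where
  "Ky \<mu> x y = - G3 y / (2 * (lam \<mu> x y)^2) + (F2 \<mu> x + G2 y) * G1 y / (lam \<mu> x y)^3
     + (2 * G1 y * G2 y) / (2 * (lam \<mu> x y)^3) - 3 * ((F1 \<mu> x)^2 + (G1 y)^2) * G1 y / (2 * (lam \<mu> x y)^4)"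

lemma KK_x_eq:
  assumes mu: "\<bar>\<mu>\<bar> < 1" and y: "\<bar>y\<bar> < 1"
  shows "KK_x \<mu> x y = Kx \<mu> x y"
proof -
  have e: "(\<lambda>s. KK \<mu> s y) = (\<lambda>s. Kexp \<mu> s y)" using KK_eq[OF mu y] by auto
  have lp: "lam \<mu> x y \<noteq> 0" using lam_pos[OF mu, of y x] y by simp
  have dA: "((\<lambda>s. F2 \<mu> s + G2 y) has_real_derivative F3 \<mu> x) (at x)"
    by (rule derivative_eq_intros F2_deriv[OF mu] refl)+ simp
  have dB: "((\<lambda>s. (F1 \<mu> s)^2 + (G1 y)^2) has_real_derivative 2 * F1 \<mu> x * F2 \<mu> x) (at x)"
    by (rule derivative_eq_intros F1_deriv[OF mu] refl)+ simp
  have "((\<lambda>s. Kexp \<mu> s y) has_real_derivative Kx \<mu> x y) (at x)"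
    unfolding Kexp_def Kx_def by (rule Kgen_deriv[OF dA dB lam_dx[OF mu] lp])
  then show ?thesis unfolding KK_x_def e by (rule DERIV_imp_deriv)
qed

lemma KK_y_eq:
  assumes mu: "\<bar>\<mu>\<bar> < 1" and y: "\<bar>y\<bar> < 1"
  shows "KK_y \<mu> x y = Ky \<mu> x y"
proof -
  have ev: "eventually (\<lambda>t. \<bar>t\<bar> < 1) (nhds y)"
  proof -
    have "eventually (\<lambda>t. t \<in> {-1<..<1}) (nhds y)"
      by (rule eventually_nhds_in_open) (use y in auto)
    then show ?thesis by (rule eventually_mono) auto
  qed
  have "KK_y \<mu> x y = deriv (\<lambda>s. Kexp \<mu> x s) y"
    unfolding KK_y_def
    by (rule deriv_cong_ev[OF eventually_mono[OF ev]]) (auto simp: KK_eq[OF mu])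
  also have "\<dots> = Ky \<mu> x y"
  proof -
    have lp: "lam \<mu> x y \<noteq> 0" using lam_pos[OF mu, of y x] y by simp
    have dA: "((\<lambda>s. F2 \<mu> x + G2 s) has_real_derivative G3 y) (at y)"
      by (rule derivative_eq_intros G2_deriv refl)+ simp
    have dB: "((\<lambda>s. (F1 \<mu> x)^2 + (G1 s)^2) has_real_derivative 2 * G1 y * G2 y) (at y)"
      by (rule derivative_eq_intros G1_deriv refl)+ simp
    have "((\<lambda>s. Kexp \<mu> x s) has_real_derivative Ky \<mu> x y) (at y)"
      unfolding Kexp_def Ky_def by (rule Kgen_deriv[OF dA dB lam_dy lp])
    then show ?thesis by (rule DERIV_imp_deriv)
  qed
  finally show ?thesis .
qed

definition Yd :: "real \<Rightarrow> real \<Rightarrow> real \<Rightarrow> real" where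
  "Yd \<mu> \<kappa> x = - sinh (\<kappa> + x + \<mu> * sin x) * (1 + \<mu> * cos x) / (2 * (cosh (\<kappa> + x + \<mu> * sin x))^2)"

lemma ycurve_deriv: "(ycurve \<mu> \<kappa> has_real_derivative Yd \<mu> \<kappa> x) (at x)"
  unfolding ycurve_def gam_def Yd_def
  apply (rule derivative_eq_intros refl | (simp; fail))+
  apply (simp add: field_simps power2_eq_square)
  done

lemma abs_prod_le: "\<bar>a\<bar> \<le> A \<Longrightarrow> \<bar>b\<bar> \<le> B \<Longrightarrow> \<bar>a * b\<bar> \<le> A * (B::real)"
  by (simp add: abs_mult mult_mono')

lemma abs_div_le: "\<bar>a\<bar> \<le> A \<Longrightarrow> 0 < d0 \<Longrightarrow> d0 \<le> D \<Longrightarrow> \<bar>a / D\<bar> \<le> A / (d0::real)"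
proof -
  assume h: "\<bar>a\<bar> \<le> A" "0 < d0" "d0 \<le> D"
  have "\<bar>a / D\<bar> = \<bar>a\<bar> / D" using h by simp
  also have "\<dots> \<le> A / d0" using h by (intro frac_le) auto
  finally show ?thesis .
qed

lemma tri4: "\<bar>p + q + r - s\<bar> \<le> \<bar>p\<bar> + \<bar>q\<bar> + \<bar>r\<bar> + \<bar>(s::real)\<bar>"
  by linarith
lemma tri2: "\<bar>p - q\<bar> \<le> \<bar>p\<bar> + \<bar>(q::real)\<bar>"
  by linarith

lemma main_bound:
  fixes a1 a2 a3 b1 b2 b3 Lm y gv w :: real
  assumes ha1: "\<bar>a1\<bar> \<le> 32/27" and ha2: "\<bar>a2\<bar> \<le> 64/27" and ha3: "\<bar>a3\<bar> \<le> 512/81"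
    and hL: "16/25 \<le> Lm" and hy0: "0 \<le> y" and hy1: "y \<le> 1/2"
    and hb1: "\<bar>b1\<bar> \<le> 2 * y" and hb2: "\<bar>b2\<bar> \<le> 2" and hb3: "\<bar>b3\<bar> \<le> 24 * y"
    and hg: "0 \<le> gv" "gv \<le> y^2" and hw: "\<bar>w\<bar> \<le> 4/3 * y"
  shows "\<bar>(- a3 / (2 * Lm^2) + (a2 + b2) * a1 / Lm^3 + (2 * a1 * a2) / (2 * Lm^3)
           - 3 * (a1^2 + b1^2) * a1 / (2 * Lm^4)) * gv
         - (- b3 / (2 * Lm^2) + (a2 + b2) * b1 / Lm^3 + (2 * b1 * b2) / (2 * Lm^3)
           - 3 * (a1^2 + b1^2) * b1 / (2 * Lm^4)) * w\<bar> \<le> 240 * y^2"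
proof -
  define l where "l = (16/25::real)"
  have l0: "0 < l" unfolding l_def by simp
  have L2: "2 * l^2 \<le> 2 * Lm^2" using hL unfolding l_def by (intro mult_left_mono power_mono) auto
  have L3: "l^3 \<le> Lm^3" using hL unfolding l_def by (intro power_mono) auto
  have L3': "2 * l^3 \<le> 2 * Lm^3" using L3 by simp
  have L4: "2 * l^4 \<le> 2 * Lm^4" using hL unfolding l_def by (intro mult_left_mono power_mono) auto
  have p2: "0 < 2 * l^2" "0 < l^3" "0 < 2 * l^3" "0 < 2 * l^4" using l0 by auto
  have b1sq: "b1^2 \<le> 1"
  proof -
    have "\<bar>b1\<bar> \<le> 1" using hb1 hy1 by linarith
    then show ?thesis using abs_le_square_iff[of b1 1] by simp
  qed
  have a1sq: "a1^2 \<le> (32/27)^2"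
    using ha1 abs_le_square_iff[of a1 "32/27"] by simp
  have sq: "\<bar>a1^2 + b1^2\<bar> \<le> (32/27)^2 + 1"
    using a1sq b1sq zero_le_power2[of a1] zero_le_power2[of b1] by (simp add: abs_le_iff)
  have s2: "\<bar>a2 + b2\<bar> \<le> 64/27 + 2" using ha2 hb2 by linarith
  have t1: "\<bar>- a3 / (2 * Lm^2)\<bar> \<le> (512/81) / (2 * l^2)"
    using abs_div_le[OF _ p2(1) L2, of "-a3" "512/81"] ha3 by simp
  have t2: "\<bar>(a2 + b2) * a1 / Lm^3\<bar> \<le> ((64/27 + 2) * (32/27)) / l^3"
    by (rule abs_div_le[OF abs_prod_le[OF s2 ha1] p2(2) L3])
  have t3: "\<bar>(2 * a1 * a2) / (2 * Lm^3)\<bar> \<le> (2 * (32/27) * (64/27)) / (2 * l^3)"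
    by (rule abs_div_le[OF _ p2(3) L3']) (use abs_prod_le[OF abs_prod_le[of 2 2 a1] ha2, OF _ ha1] in simp)
  have t4: "\<bar>3 * (a1^2 + b1^2) * a1 / (2 * Lm^4)\<bar> \<le> (3 * ((32/27)^2 + 1) * (32/27)) / (2 * l^4)"
    by (rule abs_div_le[OF _ p2(4) L4]) (use abs_prod_le[OF abs_prod_le[of 3 3 "a1^2+b1^2"] ha1, OF _ sq] in simp)
  have Kx: "\<bar>- a3 / (2 * Lm^2) + (a2 + b2) * a1 / Lm^3 + (2 * a1 * a2) / (2 * Lm^3)
           - 3 * (a1^2 + b1^2) * a1 / (2 * Lm^4)\<bar> \<le> 64"
  proof -
    have "(512/81) / (2 * l^2) + ((64/27 + 2) * (32/27)) / l^3 + (2 * (32/27) * (64/27)) / (2 * l^3)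
        + (3 * ((32/27)^2 + 1) * (32/27)) / (2 * l^4) \<le> (64::real)"
      unfolding l_def by (simp add: power_divide)
    then show ?thesis using t1 t2 t3 t4 tri4[of "- a3 / (2 * Lm^2)" "(a2 + b2) * a1 / Lm^3" "(2 * a1 * a2) / (2 * Lm^3)" "3 * (a1^2 + b1^2) * a1 / (2 * Lm^4)"] by linarith
  qed
  have u1: "\<bar>- b3 / (2 * Lm^2)\<bar> \<le> (24 * y) / (2 * l^2)"
    using abs_div_le[OF _ p2(1) L2, of "-b3" "24 * y"] hb3 by simp
  have u2: "\<bar>(a2 + b2) * b1 / Lm^3\<bar> \<le> ((64/27 + 2) * (2 * y)) / l^3"
    by (rule abs_div_le[OF abs_prod_le[OF s2 hb1] p2(2) L3])
  have u3: "\<bar>(2 * b1 * b2) / (2 * Lm^3)\<bar> \<le> (2 * (2 * y) * 2) / (2 * l^3)"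
    by (rule abs_div_le[OF _ p2(3) L3']) (use abs_prod_le[OF abs_prod_le[of 2 2 b1] hb2, OF _ hb1] in simp)
  have u4: "\<bar>3 * (a1^2 + b1^2) * b1 / (2 * Lm^4)\<bar> \<le> (3 * ((32/27)^2 + 1) * (2 * y)) / (2 * l^4)"
    by (rule abs_div_le[OF _ p2(4) L4]) (use abs_prod_le[OF abs_prod_le[of 3 3 "a1^2+b1^2"] hb1, OF _ sq] in simp)
  have Ky: "\<bar>- b3 / (2 * Lm^2) + (a2 + b2) * b1 / Lm^3 + (2 * b1 * b2) / (2 * Lm^3)
           - 3 * (a1^2 + b1^2) * b1 / (2 * Lm^4)\<bar> \<le> 121 * y"
  proof -
    have "(24 * y) / (2 * l^2) + ((64/27 + 2) * (2 * y)) / l^3 + (2 * (2 * y) * 2) / (2 * l^3)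
        + (3 * ((32/27)^2 + 1) * (2 * y)) / (2 * l^4) \<le> 121 * y"
      unfolding l_def using hy0 by (simp add: power_divide)
    then show ?thesis using u1 u2 u3 u4 tri4[of "- b3 / (2 * Lm^2)" "(a2 + b2) * b1 / Lm^3" "(2 * b1 * b2) / (2 * Lm^3)" "3 * (a1^2 + b1^2) * b1 / (2 * Lm^4)"] by linarith
  qed
  have hg': "\<bar>gv\<bar> \<le> y^2" using hg by simp
  have fin: "\<And>P Q::real. \<bar>P\<bar> \<le> 64 * y^2 \<Longrightarrow> \<bar>Q\<bar> \<le> (121 * y) * (4/3 * y) \<Longrightarrow> \<bar>P - Q\<bar> \<le> 240 * y^2"
  proof -
    fix P Q :: real
    assume "\<bar>P\<bar> \<le> 64 * y^2" "\<bar>Q\<bar> \<le> (121 * y) * (4/3 * y)"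
    moreover have "(121 * y) * (4/3 * y) = (484/3) * y^2" by (simp add: power2_eq_square)
    moreover have "0 \<le> y^2" by simp
    ultimately show "\<bar>P - Q\<bar> \<le> 240 * y^2" by linarith
  qed
  show ?thesis
    by (rule fin[OF abs_prod_le[OF Kx hg'] abs_prod_le[OF Ky hw]])
qed

lemma mu_facts:
  fixes \<mu> x :: real
  assumes "0 < \<mu>" "\<mu> < 1/4"
  shows "\<bar>\<mu>\<bar> < 1" "\<bar>2 * \<mu>\<bar> \<le> 1/2" "\<bar>6 * \<mu>^2\<bar> \<le> 3/8" "\<bar>18 * \<mu>^2\<bar> \<le> 9/8" "\<bar>24 * \<mu>^3\<bar> \<le> 3/8"
proof -
  have a: "\<mu>^2 \<le> (1/4)^2" using assms by (intro power_mono) auto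
  have b: "\<mu>^3 \<le> (1/4)^3" using assms by (intro power_mono) auto
  show "\<bar>\<mu>\<bar> < 1" "\<bar>2 * \<mu>\<bar> \<le> 1/2" using assms by auto
  show "\<bar>6 * \<mu>^2\<bar> \<le> 3/8" "\<bar>18 * \<mu>^2\<bar> \<le> 9/8" using a by (auto simp: power_divide)
  show "\<bar>24 * \<mu>^3\<bar> \<le> 3/8" using b assms by (auto simp: power_divide)
qed

lemma c_bounds:
  fixes \<mu> x :: real
  assumes "0 < \<mu>" "\<mu> < 1/4"
  shows "3/4 \<le> 1 + \<mu> * cos x" "1 + \<mu> * cos x \<le> 5/4"
proof -
  have "\<bar>\<mu> * cos x\<bar> \<le> \<mu>" using assms abs_cos_le_one[of x] by (simp add: abs_mult mult_left_le)
  then have "- \<mu> \<le> \<mu> * cos x" "\<mu> * cos x \<le> \<mu>" by (auto simp: abs_le_iff)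
  then show "3/4 \<le> 1 + \<mu> * cos x" "1 + \<mu> * cos x \<le> 5/4" using assms by linarith+
qed

lemma cpow:
  fixes \<mu> x :: real
  assumes "0 < \<mu>" "\<mu> < 1/4"
  shows "27/64 \<le> (1 + \<mu> * cos x)^3" "81/256 \<le> (1 + \<mu> * cos x)^4" "243/1024 \<le> (1 + \<mu> * cos x)^5"
proof -
  have c: "3/4 \<le> 1 + \<mu> * cos x" by (rule c_bounds[OF assms])
  have "(3/4::real)^3 \<le> (1 + \<mu> * cos x)^3" by (rule power_mono[OF c]) simp
  then show "27/64 \<le> (1 + \<mu> * cos x)^3" by (simp add: power_divide)
  have "(3/4::real)^4 \<le> (1 + \<mu> * cos x)^4" by (rule power_mono[OF c]) simp
  then show "81/256 \<le> (1 + \<mu> * cos x)^4" by (simp add: power_divide)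
  have "(3/4::real)^5 \<le> (1 + \<mu> * cos x)^5" by (rule power_mono[OF c]) simp
  then show "243/1024 \<le> (1 + \<mu> * cos x)^5" by (simp add: power_divide)
qed

lemma sin_pow_le: "\<bar>(sin (x::real))^n\<bar> \<le> 1"
proof -
  have "\<bar>sin x\<bar>^n \<le> 1" by (rule power_le_one[OF abs_ge_zero abs_sin_le_one])
  then show ?thesis by (simp add: power_abs)
qed
lemmas sin_sq_le = sin_pow_le[of _ 2] and sin_cube_le = sin_pow_le[of _ 3]

lemma sum2_le: "\<bar>a\<bar> \<le> A \<Longrightarrow> \<bar>b\<bar> \<le> B \<Longrightarrow> A + B = C \<Longrightarrow> \<bar>a + b\<bar> \<le> (C::real)"
  by linarith
lemma sum3_le: "\<bar>a\<bar> \<le> A \<Longrightarrow> \<bar>b\<bar> \<le> B \<Longrightarrow> \<bar>c\<bar> \<le> D \<Longrightarrow> A + B + D = C \<Longrightarrow> \<bar>a + b + c\<bar> \<le> (C::real)"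
  by linarith

lemma F_bounds:
  fixes \<mu> x :: real
  assumes "0 < \<mu>" "\<mu> < 1/4"
  shows "\<bar>F1 \<mu> x\<bar> \<le> 32/27" "\<bar>F2 \<mu> x\<bar> \<le> 64/27" "\<bar>F3 \<mu> x\<bar> \<le> 512/81"
proof -
  note m = mu_facts[OF assms] and cp = cpow[OF assms, of x]
  have s1: "\<bar>sin x\<bar> \<le> 1" "\<bar>cos x\<bar> \<le> 1" by (simp_all add: abs_sin_le_one abs_cos_le_one)
  have t1: "\<bar>2 * \<mu> * sin x / (1 + \<mu> * cos x)^3\<bar> \<le> (1/2 * 1) / (27/64)"
    by (rule abs_div_le[OF abs_prod_le[OF m(2) s1(1)] _ cp(1)]) simp
  have t1': "\<bar>- 2 * \<mu> * sin x / (1 + \<mu> * cos x)^3\<bar> \<le> (1/2 * 1) / (27/64)"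
    using t1 by simp
  have t2: "\<bar>2 * \<mu> * cos x / (1 + \<mu> * cos x)^3\<bar> \<le> (1/2 * 1) / (27/64)"
    by (rule abs_div_le[OF abs_prod_le[OF m(2) s1(2)] _ cp(1)]) simp
  have t3: "\<bar>6 * \<mu>^2 * (sin x)^2 / (1 + \<mu> * cos x)^4\<bar> \<le> (3/8 * 1) / (81/256)"
    by (rule abs_div_le[OF abs_prod_le[OF m(3) sin_sq_le] _ cp(2)]) simp
  have t4: "\<bar>18 * \<mu>^2 * sin x * cos x / (1 + \<mu> * cos x)^4\<bar> \<le> (9/8 * 1 * 1) / (81/256)"
    by (rule abs_div_le[OF abs_prod_le[OF abs_prod_le[OF m(4) s1(1)] s1(2)] _ cp(2)]) simp
  have t5: "\<bar>24 * \<mu>^3 * (sin x)^3 / (1 + \<mu> * cos x)^5\<bar> \<le> (3/8 * 1) / (243/1024)"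
    by (rule abs_div_le[OF abs_prod_le[OF m(5) sin_cube_le] _ cp(3)]) simp
  show "\<bar>F1 \<mu> x\<bar> \<le> 32/27" unfolding F1_def using t1 by simp
  show "\<bar>F2 \<mu> x\<bar> \<le> 64/27" unfolding F2_def by (rule sum2_le[OF t2 t3]) simp
  show "\<bar>F3 \<mu> x\<bar> \<le> 512/81" unfolding F3_def by (rule sum3_le[OF t1' t4 t5]) simp
qed

lemma gam_bounds: "0 < gam s" "gam s \<le> 1/2"
  unfolding gam_def using cosh_real_ge_1[of s] by (auto simp: divide_simps)

lemma G_bounds:
  fixes y :: real assumes "0 \<le> y" "y \<le> 1/2"
  shows "\<bar>G1 y\<bar> \<le> 2 * y" "\<bar>G2 y\<bar> \<le> 2" "\<bar>G3 y\<bar> \<le> 24 * y" "0 \<le> gg y" "gg y \<le> y^2"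
proof -
  have y2: "y^2 \<le> 1/4" using power_mono[OF assms(2), of 2] assms by (simp add: power_divide)
  have y20: "0 \<le> y^2" by simp
  have y3': "y * y^2 \<le> y * (1/4)" by (rule mult_left_mono[OF y2 assms(1)])
  have y3e: "y^3 = y * y^2" by (simp add: power2_eq_square power3_eq_cube)
  have y30: "0 \<le> y * y^2" using assms by simp
  show "\<bar>G1 y\<bar> \<le> 2 * y" unfolding G1_def y3e abs_le_iff using y3' y30 assms by linarith
  show "\<bar>G2 y\<bar> \<le> 2" unfolding G2_def abs_le_iff using y2 y20 by linarith
  show "\<bar>G3 y\<bar> \<le> 24 * y" unfolding G3_def using assms by simp
  have y4: "y^2 * y^2 \<le> y^2 * (1/4)" by (rule mult_left_mono[OF y2 y20])
  have y40: "0 \<le> y^2 * y^2" by simp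
  have ge: "gg y = y^2 - y^2 * y^2" unfolding gg_def by (simp add: right_diff_distrib)
  show "0 \<le> gg y" "gg y \<le> y^2" unfolding ge using y4 y40 y20 by linarith+
qed

lemma lam_lower:
  fixes \<mu> x y :: real assumes "0 < \<mu>" "\<mu> < 1/4" "0 \<le> y" "y \<le> 1/2"
  shows "16/25 \<le> lam \<mu> x y"
proof -
  have c: "0 < 1 + \<mu> * cos x" "1 + \<mu> * cos x \<le> 5/4" using c_bounds[OF assms(1,2), of x] by auto
  have "(1 + \<mu> * cos x)^2 \<le> (5/4)^2" by (rule power_mono) (use c in auto)
  then have "16/25 \<le> ff \<mu> x" unfolding ff_def using c
    by (simp add: divide_simps power_divide)
  then show ?thesis unfolding lam_def using G_bounds(4)[OF assms(3,4)] by simp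
qed

lemma ycurve_pos: "0 < ycurve \<mu> \<kappa> x" "ycurve \<mu> \<kappa> x \<le> 1/2"
  unfolding ycurve_def using gam_bounds by auto

lemma II_eq:
  assumes "0 < \<mu>" "\<mu> < 1/4"
  shows "II \<mu> \<kappa> x = Kx \<mu> x (ycurve \<mu> \<kappa> x) * gg (ycurve \<mu> \<kappa> x)
      - Ky \<mu> x (ycurve \<mu> \<kappa> x) * ff \<mu> x * Yd \<mu> \<kappa> x"
proof -
  have mu: "\<bar>\<mu>\<bar> < 1" using assms by auto
  have y: "\<bar>ycurve \<mu> \<kappa> x\<bar> < 1" using ycurve_pos[of \<mu> \<kappa> x] by auto
  show ?thesis unfolding II_def KK_x_eq[OF mu y] KK_y_eq[OF mu y] DERIV_imp_deriv[OF ycurve_deriv] ..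
qed

lemma ffYd_bound:
  fixes \<mu> \<kappa> x :: real assumes "0 < \<mu>" "\<mu> < 1/4"
  shows "\<bar>ff \<mu> x * Yd \<mu> \<kappa> x\<bar> \<le> 4/3 * ycurve \<mu> \<kappa> x"
proof -
  define s where "s = \<kappa> + x + \<mu> * sin x"
  define c where "c = 1 + \<mu> * cos x"
  have c: "3/4 \<le> c" using c_bounds[OF assms, of x] unfolding c_def by auto
  have ch: "1 \<le> cosh s" by (rule cosh_real_ge_1)
  have sh: "\<bar>sinh s\<bar> \<le> cosh s" using sinh_le_cosh_real[of s] sinh_le_cosh_real[of "-s"] by (simp add: abs_le_iff)
  have "ff \<mu> x * Yd \<mu> \<kappa> x = - sinh s / (c * (2 * (cosh s)^2))"
    unfolding ff_def Yd_def s_def[symmetric] c_def[symmetric] using c by (simp add: power2_eq_square field_simps)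
  then have "\<bar>ff \<mu> x * Yd \<mu> \<kappa> x\<bar> = \<bar>sinh s\<bar> / (c * (2 * (cosh s)^2))"
    using c ch by (simp add: abs_divide abs_mult)
  also have "\<dots> \<le> cosh s / (c * (2 * (cosh s)^2))"
    using sh c ch by (intro divide_right_mono) auto
  also have "\<dots> = (1 / c) * (1 / (2 * cosh s))"
    using c ch by (simp add: power2_eq_square field_simps)
  also have "\<dots> \<le> (4/3) * (1 / (2 * cosh s))"
    using c ch by (intro mult_right_mono) (auto simp: divide_simps)
  also have "1 / (2 * cosh s) = ycurve \<mu> \<kappa> x" unfolding ycurve_def gam_def s_def ..
  finally show ?thesis .
qed

lemma II_bound:
  fixes \<mu> \<kappa> x :: real assumes "0 < \<mu>" "\<mu> < 1/4"
  shows "\<bar>II \<mu> \<kappa> x\<bar> \<le> 240 * (ycurve \<mu> \<kappa> x)^2"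
proof -
  define y where "y = ycurve \<mu> \<kappa> x"
  have y: "0 \<le> y" "y \<le> 1/2" using ycurve_pos[of \<mu> \<kappa> x] unfolding y_def by auto
  note G = G_bounds[OF y] and F = F_bounds[OF assms, of x]
  have w: "\<bar>ff \<mu> x * Yd \<mu> \<kappa> x\<bar> \<le> 4/3 * y" using ffYd_bound[OF assms] unfolding y_def .
  have "\<bar>Kx \<mu> x y * gg y - Ky \<mu> x y * (ff \<mu> x * Yd \<mu> \<kappa> x)\<bar> \<le> 240 * y^2"
    unfolding Kx_def Ky_def
    by (rule main_bound[OF F(1) F(2) F(3) lam_lower[OF assms y] y G(1) G(2) G(3) G(4) G(5) w])
  then show ?thesis unfolding II_eq[OF assms] y_def[symmetric] by (simp add: mult.assoc)
qed

lemma II_cont: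
  assumes "0 < \<mu>" "\<mu> < 1/4"
  shows "continuous_on UNIV (II \<mu> \<kappa>)"
proof -
  have mu: "\<bar>\<mu>\<bar> < 1" using assms by auto
  have cF1: "isCont (F1 \<mu>) x" for x by (rule DERIV_isCont[OF F1_deriv[OF mu]])
  have cF2: "isCont (F2 \<mu>) x" for x by (rule DERIV_isCont[OF F2_deriv[OF mu]])
  have cff: "isCont (ff \<mu>) x" for x by (rule DERIV_isCont[OF ff_deriv[OF mu]])
  have cF3: "isCont (F3 \<mu>) x" for x
    unfolding F3_def using cpos[OF mu, of x] by (intro continuous_intros) auto
  have cy: "isCont (ycurve \<mu> \<kappa>) x" for x by (rule DERIV_isCont[OF ycurve_deriv])
  have cYd: "isCont (Yd \<mu> \<kappa>) x" for x
    unfolding Yd_def using cosh_real_ge_1 by (intro continuous_intros) (auto; smt (verit) cosh_real_ge_1)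
  have cgg: "isCont (\<lambda>x. gg (ycurve \<mu> \<kappa> x)) x" for x
    unfolding gg_def by (intro continuous_intros cy)
  have cG: "isCont (\<lambda>x. G1 (ycurve \<mu> \<kappa> x)) x" "isCont (\<lambda>x. G2 (ycurve \<mu> \<kappa> x)) x"
    "isCont (\<lambda>x. G3 (ycurve \<mu> \<kappa> x)) x" for x
    unfolding G1_def G2_def G3_def by (intro continuous_intros cy)+
  have cl: "isCont (\<lambda>x. lam \<mu> x (ycurve \<mu> \<kappa> x)) x" for x
    unfolding lam_def by (intro continuous_intros cff cgg)
  have lp: "lam \<mu> x (ycurve \<mu> \<kappa> x) \<noteq> 0" for x
    using lam_pos[OF mu, of "ycurve \<mu> \<kappa> x" x] ycurve_pos[of \<mu> \<kappa> x] by auto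
  have e: "II \<mu> \<kappa> = (\<lambda>x. Kx \<mu> x (ycurve \<mu> \<kappa> x) * gg (ycurve \<mu> \<kappa> x)
      - Ky \<mu> x (ycurve \<mu> \<kappa> x) * ff \<mu> x * Yd \<mu> \<kappa> x)"
    using II_eq[OF assms] by auto
  have "isCont (II \<mu> \<kappa>) x" for x
    unfolding e Kx_def Ky_def
    by (intro continuous_intros cF1 cF2 cF3 cff cYd cgg cG cl; use lp in simp)
  then show ?thesis by (intro continuous_at_imp_continuous_on) auto
qed


lemma tail_bound:
  fixes h :: "real \<Rightarrow> real" and M L :: real
  assumes cont: "continuous_on UNIV h" and M: "0 \<le> M" and b: "\<And>x. x \<ge> L \<Longrightarrow> \<bar>h x\<bar> \<le> M * exp (- 2 * x)"
  shows "set_integrable lborel {L..} h" "\<bar>LBINT x:{L..}. h x\<bar> \<le> M * (exp (- 2 * L) / 2)"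
proof -
  have g: "((\<lambda>x. M * exp (- 2 * x)) has_integral M * (exp (- 2 * L) / 2)) {L..}"
    using has_integral_mult_right[OF has_integral_exp_minus_to_infinity[of 2 L]] by simp
  have gi: "(\<lambda>x. M * exp (- 2 * x)) integrable_on {L..}" using g by (auto simp: integrable_on_def)
  have meas: "h \<in> borel_measurable (lebesgue_on {L..})"
    by (rule continuous_imp_measurable_on_sets_lebesgue[OF continuous_on_subset[OF cont]]) auto
  have ab: "h absolutely_integrable_on {L..}"
    by (rule measurable_bounded_by_integrable_imp_absolutely_integrable[OF meas _ gi]) (use b in auto)
  have bm: "(\<lambda>x. indicator {L..} x *\<^sub>R h x) \<in> borel_measurable lborel"
    using borel_measurable_continuous_onI[OF cont] by measurable
  show si: "set_integrable lborel {L..} h"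
    using ab unfolding set_integrable_def using integrable_completion[OF bm] by simp
  have A: "(LBINT x:{L..}. h x) = integral {L..} h" by (rule set_borel_integral_eq_integral(2)[OF si])
  have B: "norm (integral {L..} h) \<le> integral {L..} (\<lambda>x. M * exp (- 2 * x))"
    by (rule integral_norm_bound_integral[OF set_borel_integral_eq_integral(1)[OF si] gi]) (use b in auto)
  have C: "integral {L..} (\<lambda>x. M * exp (- 2 * x)) = M * (exp (- 2 * L) / 2)"
    using g by (rule integral_unique)
  have "\<bar>integral {L..} h\<bar> \<le> M * (exp (- 2 * L) / 2)" using B C by (metis real_norm_def)
  then show "\<bar>LBINT x:{L..}. h x\<bar> \<le> M * (exp (- 2 * L) / 2)" by (simp only: A)
qed

lemma two_cosh_ge: "exp \<bar>s\<bar> \<le> 2 * cosh (s::real)"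
  unfolding cosh_field_def by (cases "s \<ge> 0") (auto simp: add_pos_pos)

lemma cosh_le_exp: "0 \<le> (s::real) \<Longrightarrow> cosh s \<le> exp s"
  unfolding cosh_field_def by auto

lemma ycurve_exp:
  fixes \<mu> \<kappa> x :: real assumes "0 < \<mu>" "\<mu> < 1/4"
  shows "(ycurve \<mu> \<kappa> x)^2 \<le> exp (2 * \<bar>\<kappa>\<bar> + 1/2) * exp (- 2 * \<bar>x\<bar>)"
proof -
  define s where "s = \<kappa> + x + \<mu> * sin x"
  have c: "0 < cosh s" using cosh_real_ge_1[of s] by simp
  have "ycurve \<mu> \<kappa> x = 1 / (2 * cosh s)" unfolding ycurve_def gam_def s_def ..
  also have "\<dots> \<le> 1 / exp \<bar>s\<bar>" using two_cosh_ge[of s] c by (intro divide_left_mono) auto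
  also have "\<dots> = exp (- \<bar>s\<bar>)" by (simp add: exp_minus field_simps)
  finally have y1: "ycurve \<mu> \<kappa> x \<le> exp (- \<bar>s\<bar>)" .
  have y0: "0 \<le> ycurve \<mu> \<kappa> x" using ycurve_pos[of \<mu> \<kappa> x] by simp
  have "(ycurve \<mu> \<kappa> x)^2 \<le> (exp (- \<bar>s\<bar>))^2" by (rule power_mono[OF y1 y0])
  also have "\<dots> = exp (- 2 * \<bar>s\<bar>)" by (simp add: exp_double[symmetric] power2_eq_square exp_add[symmetric])
  also have "\<dots> \<le> exp (2 * \<bar>\<kappa>\<bar> + 1/2 + (- 2 * \<bar>x\<bar>))"
  proof -
    have "\<bar>\<mu> * sin x\<bar> \<le> \<mu>" using assms abs_sin_le_one[of x] by (simp add: abs_mult mult_left_le)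
    then have "\<bar>x\<bar> \<le> \<bar>s\<bar> + \<bar>\<kappa>\<bar> + \<mu>" unfolding s_def by linarith
    then show ?thesis using assms by simp
  qed
  also have "\<dots> = exp (2 * \<bar>\<kappa>\<bar> + 1/2) * exp (- 2 * \<bar>x\<bar>)" by (rule exp_add)
  finally show ?thesis .
qed

lemma gamL: "0 \<le> L \<Longrightarrow> exp (- 2 * L) \<le> 4 * (gam L)^2"
proof -
  assume L: "0 \<le> L"
  have c: "0 < cosh L" using cosh_real_ge_1[of L] by simp
  have "1 / (2 * exp L) \<le> gam L" unfolding gam_def using cosh_le_exp[OF L] c
    by (intro divide_left_mono) auto
  then have "(1 / (2 * exp L))^2 \<le> (gam L)^2" by (rule power_mono) simp
  moreover have "(1 / (2 * exp L))^2 = exp (- 2 * L) / 4"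
    by (simp add: power2_eq_square exp_minus exp_add[symmetric] field_simps)
  ultimately show ?thesis by simp
qed

lemma exp_half: "exp (1/2 :: real) \<le> 2"
proof (rule ccontr)
  assume "\<not> exp (1/2 :: real) \<le> 2"
  then have "2 * 2 < exp (1/2 :: real) * exp (1/2)" by (intro mult_strict_mono) auto
  also have "\<dots> = exp 1" by (simp add: exp_add[symmetric])
  finally show False using exp_le by simp
qed

theorem mainTheorem9:
  fixes \<mu> \<kappa> L :: real
  assumes "0 < \<mu>" and "\<mu> < 1/4" and "L > 0"
  shows "set_integrable lborel {..-L} (II \<mu> \<kappa>)
       \<and> set_integrable lborel {L..} (II \<mu> \<kappa>)
       \<and> \<bar>BB \<mu> L \<kappa>\<bar> \<le> 1200 * (1 + 2 * exp (2 * \<bar>\<kappa>\<bar>)) * (gam L)^2"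
proof -
  define M where "M = 240 * exp (2 * \<bar>\<kappa>\<bar> + 1/2)"
  have M0: "0 \<le> M" unfolding M_def by simp
  have bnd: "\<bar>II \<mu> \<kappa> x\<bar> \<le> M * exp (- 2 * \<bar>x\<bar>)" for x
  proof -
    have "\<bar>II \<mu> \<kappa> x\<bar> \<le> 240 * (ycurve \<mu> \<kappa> x)^2" by (rule II_bound[OF assms(1,2)])
    also have "\<dots> \<le> 240 * (exp (2 * \<bar>\<kappa>\<bar> + 1/2) * exp (- 2 * \<bar>x\<bar>))"
      using ycurve_exp[OF assms(1,2), of \<kappa> x] by simp
    finally show ?thesis unfolding M_def by simp
  qed
  have cont: "continuous_on UNIV (II \<mu> \<kappa>)" by (rule II_cont[OF assms(1,2)])
  have cont2: "continuous_on UNIV (\<lambda>x. II \<mu> \<kappa> (- x))"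
    by (rule continuous_on_compose2[OF cont]) (auto intro: continuous_intros)
  have bR: "\<bar>II \<mu> \<kappa> x\<bar> \<le> M * exp (- 2 * x)" if "x \<ge> L" for x
    using bnd[of x] that assms(3) by simp
  have bL: "\<bar>II \<mu> \<kappa> (- x)\<bar> \<le> M * exp (- 2 * x)" if "x \<ge> L" for x
    using bnd[of "-x"] that assms(3) by simp
  note R = tail_bound[where L=L, OF cont M0 bR] and Lf = tail_bound[where L=L, OF cont2 M0 bL]
  have setL: "{x::real. - x \<in> {..-L}} = {L..}" by auto
  have intL: "set_integrable lborel {..-L} (II \<mu> \<kappa>)"
  proof -
    have "integrable lborel (\<lambda>x. indicator {L..} x *\<^sub>R II \<mu> \<kappa> (- x))"
      using Lf(1) unfolding set_integrable_def .
    then have "integrable lborel (\<lambda>x. (\<lambda>x. indicator {L..} x *\<^sub>R II \<mu> \<kappa> (- x)) (0 + (-1) * x))"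
      by (rule lborel_integrable_real_affine) simp
    moreover have "(\<lambda>x. (\<lambda>x. indicator {L..} x *\<^sub>R II \<mu> \<kappa> (- x)) (0 + (-1) * x))
        = (\<lambda>x. indicator {..-L} x *\<^sub>R II \<mu> \<kappa> x)"
      by (auto simp: indicator_def)
    ultimately show ?thesis unfolding set_integrable_def by simp
  qed
  have eqL: "(LBINT x:{..-L}. II \<mu> \<kappa> x) = (LBINT x:{L..}. II \<mu> \<kappa> (- x))"
    using set_integral_reflect[of "{..-L}" "II \<mu> \<kappa>"] unfolding setL .
  have "\<bar>BB \<mu> L \<kappa>\<bar> \<le> \<bar>LBINT x:{..-L}. II \<mu> \<kappa> x\<bar> + \<bar>LBINT x:{L..}. II \<mu> \<kappa> x\<bar>"
    unfolding BB_def by (rule abs_triangle_ineq)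
  also have "\<dots> \<le> M * (exp (- 2 * L) / 2) + M * (exp (- 2 * L) / 2)"
    unfolding eqL using R(2) Lf(2) by linarith
  also have "\<dots> = 240 * exp (2 * \<bar>\<kappa>\<bar>) * exp (1/2) * exp (- 2 * L)"
    unfolding M_def by (simp add: exp_add)
  also have "\<dots> \<le> 240 * exp (2 * \<bar>\<kappa>\<bar>) * 2 * (4 * (gam L)^2)"
    using exp_half gamL[of L] assms(3) by (intro mult_mono) auto
  also have "\<dots> \<le> 1200 * (1 + 2 * exp (2 * \<bar>\<kappa>\<bar>)) * (gam L)^2"
  proof -
    have "0 \<le> (gam L)^2" by simp
    moreover have "0 \<le> exp (2 * \<bar>\<kappa>\<bar>)" by simp
    ultimately have "1920 * exp (2 * \<bar>\<kappa>\<bar>) * (gam L)^2 \<le> 1200 * (1 + 2 * exp (2 * \<bar>\<kappa>\<bar>)) * (gam L)^2"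
      by (intro mult_right_mono) auto
    then show ?thesis by simp
  qed
  finally show ?thesis using intL R(1) by simp
qed

end
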